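(* There exists $\beta_0>0$ such that for every inverse temperature $\beta>\beta_0$ and every translation invariant EA$_\beta$ spin glass distribution $\nu$ on $\mathbb Z^2$, $\nu$-almost surely every dual vertex lies on only finitely many unsatisfied simple dual cycles.
   Context: Lattice $\mathbb Z^2$, dual lattice $(\mathbb Z^2)^*=(\tfrac12,\tfrac12)+\mathbb Z^2$, each dual edge $e^*$ identified with the unique edge $e$ of $\mathbb Z^2$ it crosses. For a finite subgraph $C$: $C^c$ is the subgraph on $\mathbb Z^2\setminus V(C)$, $\partial C^c$ the vertices of $C^c$ with a neighbour in $C$, $\bar C=C\cup\partial C^c$; for $\tau\in\{\pm1\}^{V(\partial C^c)}$, $\mathbb P^{C,\tau}_{w,\beta}(\sigma)\propto\exp(\beta\sum w_{xy}\sigma_x\sigma_y)$ (sum over neighbouring pairs in $\bar C$) on spin configurations of $\bar C$ equal to $\tau$ on $\partial C^c$. An EA$_\beta$ spin glass distribution ($0\le\beta<\infty$) is a joint law of interactions $w$ (i.i.d. standard normal on $E(\mathbb Z^2)$) and spins $\sigma\in\{\pm1\}^{\mathbb Z^2}$ such that for every finite $C$ the conditional law of $\sigma_{\bar C}$ given $\sigma_{C^c}$ and $w$ is $\mathbb P^{C,\sigma_{\partial C^c}}_{w,\beta}$; translation invariance is under the diagonal action of $\mathbb Z^2$. An edge $e=\{i,j\}$ (and $e^*$) is unsatisfied if $w_e\sigma_i\sigma_j<0$; an unsatisfied cycle is a dual cycle all of whose edges are unsatisfied. *)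

theory Defs
  imports "HOL-Probability.Probability"
begin

text \<open>An edge of Z^2 is encoded as a pair (x, d):
  d = False is the horizontal edge {x, x+(1,0)}, d = True the vertical edge {x, x+(0,1)}.
  This is a bijection with the nearest-neighbour edges of Z^2.\<close>

type_synonym vertex = "int \<times> int"
type_synonym edge = "vertex \<times> bool"

definition other_end :: "edge \<Rightarrow> vertex" where
  "other_end e = (if snd e then (fst (fst e), snd (fst e) + 1) else (fst (fst e) + 1, snd (fst e)))"

text \<open>Sample space: interactions w and spins sigma (spins are real numbers in {-1,1}).\<close>

type_synonym config = "(edge \<Rightarrow> real) \<times> (vertex \<Rightarrow> real)"

definition W_M :: "(edge \<Rightarrow> real) measure" where
  "W_M = PiM UNIV (\<lambda>_. borel)"

definition spin_M :: "vertex set \<Rightarrow> (vertex \<Rightarrow> real) measure" where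
  "spin_M A = PiM A (\<lambda>_. count_space {-1, 1})"

definition Omega_M :: "config measure" where
  "Omega_M = W_M \<Otimes>\<^sub>M spin_M UNIV"

definition gauss_iid :: "(edge \<Rightarrow> real) measure" where
  "gauss_iid = PiM UNIV (\<lambda>_. density lborel (normal_density 0 1))"

text \<open>Edges with at least one endpoint in C (the interactions of C-bar that are not constant
  given the boundary condition).\<close>
definition edges_touching :: "vertex set \<Rightarrow> edge set" where
  "edges_touching C = {e. fst e \<in> C \<or> other_end e \<in> C}"

definition energy :: "vertex set \<Rightarrow> (edge \<Rightarrow> real) \<Rightarrow> (vertex \<Rightarrow> real) \<Rightarrow> real" where
  "energy C w s = (\<Sum>e\<in>edges_touching C. w e * s (fst e) * s (other_end e))"

definition glue :: "vertex set \<Rightarrow> (vertex \<Rightarrow> real) \<Rightarrow> (vertex \<Rightarrow> real) \<Rightarrow> (vertex \<Rightarrow> real)" where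
  "glue C xi tau = (\<lambda>x. if x \<in> C then xi x else tau x)"

text \<open>Finite-volume Gibbs probability P^{C,tau}_{w,beta} of the configuration eta on C,
  with boundary condition taken from tau (only tau on the outer boundary matters).\<close>
definition gibbs_prob :: "real \<Rightarrow> vertex set \<Rightarrow> (edge \<Rightarrow> real) \<Rightarrow> (vertex \<Rightarrow> real)
    \<Rightarrow> (vertex \<Rightarrow> real) \<Rightarrow> real" where
  "gibbs_prob \<beta> C w tau eta =
     exp (\<beta> * energy C w (glue C eta tau)) /
     (\<Sum>xi\<in>PiE C (\<lambda>_. {-1, 1}). exp (\<beta> * energy C w (glue C xi tau)))"

text \<open>The DLR condition says: for every finite C, the conditional
  law of sigma on C given w and sigma outside C is the Gibbs measure; expressed through the defining
  identity of conditional probabilities against all events of the conditioning sigma-algebra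
  (generated by w and the restriction of sigma to the complement of C).\<close>
definition EA_dist :: "real \<Rightarrow> config measure \<Rightarrow> bool" where
  "EA_dist \<beta> \<nu> \<longleftrightarrow>
     prob_space \<nu> \<and> sets \<nu> = sets Omega_M \<and>
     distr \<nu> W_M fst = gauss_iid \<and>
     (\<forall>C. finite C \<longrightarrow>
        (\<forall>eta \<in> PiE C (\<lambda>_. {-1, 1}). \<forall>B \<in> sets (W_M \<Otimes>\<^sub>M spin_M (- C)).
          measure \<nu> {\<omega> \<in> space \<nu>. (\<forall>x\<in>C. snd \<omega> x = eta x) \<and>
                                    (fst \<omega>, restrict (snd \<omega>) (- C)) \<in> B}
          = (\<integral>\<omega>. indicator {\<omega> \<in> space \<nu>. (fst \<omega>, restrict (snd \<omega>) (- C)) \<in> B} \<omega>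
                   * gibbs_prob \<beta> C (fst \<omega>) (snd \<omega>) eta \<partial>\<nu>)))"

definition shift :: "vertex \<Rightarrow> config \<Rightarrow> config" where
  "shift a \<omega> = ((\<lambda>e. fst \<omega> ((fst (fst e) + fst a, snd (fst e) + snd a), snd e)),
                 (\<lambda>x. snd \<omega> (fst x + fst a, snd x + snd a)))"

definition translation_invariant :: "config measure \<Rightarrow> bool" where
  "translation_invariant \<nu> \<longleftrightarrow> (\<forall>a. distr \<nu> \<nu> (shift a) = \<nu>)"

text \<open>Dual lattice: the dual vertex with index d = (a,b) is the point (a+1/2, b+1/2).
  Two dual vertices are adjacent iff at l1-distance 1; the dual edge between them is identified
  with the unique primal edge it crosses.\<close>
definition dual_adj :: "vertex \<Rightarrow> vertex \<Rightarrow> bool" where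
  "dual_adj u v \<longleftrightarrow> \<bar>fst u - fst v\<bar> + \<bar>snd u - snd v\<bar> = 1"

definition dual_edge :: "vertex \<Rightarrow> vertex \<Rightarrow> edge" where
  "dual_edge u v = (if fst u = fst v then ((fst u, max (snd u) (snd v)), False)
                    else ((max (fst u) (fst v), snd u), True))"

definition dual_cycle_list :: "vertex list \<Rightarrow> bool" where
  "dual_cycle_list vs \<longleftrightarrow> length vs \<ge> 3 \<and> distinct vs \<and>
     (\<forall>i < length vs. dual_adj (vs ! i) (vs ! ((i + 1) mod length vs)))"

definition cycle_edges :: "vertex list \<Rightarrow> edge set" where
  "cycle_edges vs = {dual_edge (vs ! i) (vs ! ((i + 1) mod length vs)) | i. i < length vs}"

definition dual_cycle_through :: "vertex \<Rightarrow> edge set \<Rightarrow> bool" where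
  "dual_cycle_through d S \<longleftrightarrow> (\<exists>vs. dual_cycle_list vs \<and> d \<in> set vs \<and> S = cycle_edges vs)"

definition unsatisfied :: "config \<Rightarrow> edge \<Rightarrow> bool" where
  "unsatisfied \<omega> e \<longleftrightarrow> fst \<omega> e * snd \<omega> (fst e) * snd \<omega> (other_end e) < 0"

end

theory Submission
  imports Defs
begin

lemma dual_edge_inj:
  assumes "dual_adj u v" "dual_adj u' v'" "dual_edge u v = dual_edge u' v'"
  shows "(u = u' \<and> v = v') \<or> (u = v' \<and> v = u')"
proof -
  obtain a b where u: "u = (a,b)" by fastforce
  obtain c d where v: "v = (c,d)" by fastforce
  obtain a' b' where u': "u' = (a',b')" by fastforce
  obtain c' d' where v': "v' = (c',d')" by fastforce
  show ?thesis using assms unfolding u v u' v' dual_adj_def dual_edge_def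
    by (auto split: if_splits simp: max_def abs_if)
qed

definition nbrs :: "vertex \<Rightarrow> vertex set" where
  "nbrs d = {(fst d + 1, snd d), (fst d - 1, snd d), (fst d, snd d + 1), (fst d, snd d - 1)}"

lemma dual_adj_iff: "dual_adj d n \<longleftrightarrow> n \<in> nbrs d"
proof -
  obtain a b where d: "d = (a,b)" by fastforce
  obtain c e where n: "n = (c,e)" by fastforce
  show ?thesis unfolding d n dual_adj_def nbrs_def by (auto simp: abs_if)
qed

lemma finite_nbrs: "finite (nbrs d)" and card_nbrs: "card (nbrs d) \<le> 4"
  unfolding nbrs_def by (auto intro: card_insert_le_m1)

definition plaq :: "vertex \<Rightarrow> edge set" where
  "plaq d = {((fst d, snd d), False), ((fst d, snd d + 1), False), ((fst d, snd d), True), ((fst d + 1, snd d), True)}"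

lemma plaq_image: "plaq d = dual_edge d ` nbrs d"
  unfolding plaq_def nbrs_def dual_edge_def by (auto simp: max_def)

lemma inj_dual_edge: "inj_on (dual_edge d) (nbrs d)"
proof -
  obtain a b where d: "d = (a,b)" by fastforce
  show ?thesis unfolding d inj_on_def nbrs_def dual_edge_def by (auto simp: max_def split: if_splits)
qed

lemma dual_adj_sym: "dual_adj x y \<Longrightarrow> dual_adj y x"
  unfolding dual_adj_def by (simp add: abs_minus_commute)

lemma dual_edge_sym: "dual_adj x y \<Longrightarrow> dual_edge x y = dual_edge y x"
proof -
  obtain a b where x: "x = (a,b)" by fastforce
  obtain c e where y: "y = (c,e)" by fastforce
  show "dual_adj x y \<Longrightarrow> dual_edge x y = dual_edge y x"
    unfolding x y dual_edge_def dual_adj_def by (auto simp: max_def abs_if split: if_splits)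
qed

lemma cycle_parity:
  assumes cyc: "dual_cycle_list vs"
  shows "even (card (plaq d \<inter> cycle_edges vs))"
proof -
  define L where "L = length vs"
  have L3: "L \<ge> 3" and dis: "distinct vs" and adj: "\<And>i. i < L \<Longrightarrow> dual_adj (vs ! i) (vs ! ((i + 1) mod L))"
    using cyc unfolding dual_cycle_list_def L_def by auto
  define N where "N = {n \<in> nbrs d. dual_edge d n \<in> cycle_edges vs}"
  have "plaq d \<inter> cycle_edges vs = dual_edge d ` N"
    unfolding plaq_image N_def by auto
  hence cardeq: "card (plaq d \<inter> cycle_edges vs) = card N"
    by (metis (no_types, lifting) N_def card_image inj_dual_edge inj_on_subset mem_Collect_eq subsetI)
  have Nchar: "N = {n. \<exists>i<L. (d = vs ! i \<and> n = vs ! ((i+1) mod L)) \<or> (d = vs ! ((i+1) mod L) \<and> n = vs ! i)}"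
  proof (intro set_eqI iffI)
    fix n assume "n \<in> N"
    then obtain i where i: "i < L" "dual_edge d n = dual_edge (vs ! i) (vs ! ((i + 1) mod L))" and nn: "n \<in> nbrs d"
      unfolding N_def cycle_edges_def L_def by auto
    have "dual_adj d n" using nn dual_adj_iff by auto
    from dual_edge_inj[OF this adj[OF i(1)] i(2)] i(1)
    show "n \<in> {n. \<exists>i<L. (d = vs ! i \<and> n = vs ! ((i+1) mod L)) \<or> (d = vs ! ((i+1) mod L) \<and> n = vs ! i)}"
      by auto
  next
    fix n assume "n \<in> {n. \<exists>i<L. (d = vs ! i \<and> n = vs ! ((i+1) mod L)) \<or> (d = vs ! ((i+1) mod L) \<and> n = vs ! i)}"
    then obtain i where i: "i < L" and c: "(d = vs ! i \<and> n = vs ! ((i+1) mod L)) \<or> (d = vs ! ((i+1) mod L) \<and> n = vs ! i)"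
      by auto
    have a: "dual_adj (vs ! i) (vs ! ((i + 1) mod L))" using adj i by auto
    have "dual_edge (vs ! i) (vs ! ((i + 1) mod L)) \<in> cycle_edges vs"
      unfolding cycle_edges_def L_def using i L_def by auto
    hence m: "dual_edge (vs ! ((i + 1) mod L)) (vs ! i) \<in> cycle_edges vs" using dual_edge_sym[OF a] by metis
    from c show "n \<in> N"
    proof
      assume h: "d = vs ! i \<and> n = vs ! ((i + 1) mod L)"
      show "n \<in> N" unfolding N_def using h a m \<open>dual_edge (vs ! i) (vs ! ((i + 1) mod L)) \<in> cycle_edges vs\<close>
        using dual_adj_iff by blast
    next
      assume h: "d = vs ! ((i + 1) mod L) \<and> n = vs ! i"
      show "n \<in> N" unfolding N_def using h dual_adj_sym[OF a] m dual_adj_iff by blast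
    qed
  qed
  show ?thesis
  proof (cases "d \<in> set vs")
    case False
    hence "N = {}" unfolding Nchar L_def using L3 L_def
      by (auto, metis L_def mod_less_divisor nth_mem le_less_trans zero_less_numeral less_le_trans)
    then show ?thesis using cardeq by simp
  next
    case True
    then obtain j where j: "j < L" "vs ! j = d" unfolding L_def by (auto simp: in_set_conv_nth)
    define jp where "jp = (if j = 0 then L - 1 else j - 1)"
    have sucmod: "\<And>i. i < L \<Longrightarrow> (i + 1) mod L = (if i + 1 = L then 0 else i + 1)"
      by simp
    have jpL: "jp < L" unfolding jp_def using L3 j by auto
    have jp1: "(jp + 1) mod L = j" using sucmod[OF jpL] unfolding jp_def using j L3 by auto
    have eqi: "\<And>i. i < L \<Longrightarrow> vs ! i = d \<longleftrightarrow> i = j" using dis j unfolding L_def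
      by (metis nth_eq_iff_index_eq)
    have eqs: "\<And>i. i < L \<Longrightarrow> (i + 1) mod L = j \<longleftrightarrow> i = jp"
    proof -
      fix i assume "i < L"
      show "(i + 1) mod L = j \<longleftrightarrow> i = jp"
        using sucmod[OF \<open>i < L\<close>] j \<open>i < L\<close> unfolding jp_def by auto
    qed
    have "N = {vs ! ((j+1) mod L), vs ! jp}"
      unfolding Nchar
    proof (intro set_eqI iffI)
      fix n assume "n \<in> {n. \<exists>i<L. d = vs ! i \<and> n = vs ! ((i + 1) mod L) \<or> d = vs ! ((i + 1) mod L) \<and> n = vs ! i}"
      then obtain i where i: "i < L" "d = vs ! i \<and> n = vs ! ((i + 1) mod L) \<or> d = vs ! ((i + 1) mod L) \<and> n = vs ! i" by auto
      have ml: "(i+1) mod L < L" using L3 by auto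
      show "n \<in> {vs ! ((j+1) mod L), vs ! jp}"
        using i eqi[OF i(1)] eqi[OF ml] eqs[OF i(1)] by auto
    next
      fix n assume "n \<in> {vs ! ((j+1) mod L), vs ! jp}"
      then show "n \<in> {n. \<exists>i<L. d = vs ! i \<and> n = vs ! ((i + 1) mod L) \<or> d = vs ! ((i + 1) mod L) \<and> n = vs ! i}"
        using j jpL jp1 by auto
    qed
    moreover have "vs ! ((j+1) mod L) \<noteq> vs ! jp"
    proof
      assume "vs ! ((j+1) mod L) = vs ! jp"
      moreover have "(j+1) mod L < L" using L3 by simp
      ultimately have "(j+1) mod L = jp" using dis jpL unfolding L_def using nth_eq_iff_index_eq by blast
      thus False using sucmod[OF j(1)] sucmod[OF jpL] jp1 j L3 unfolding jp_def by (auto split: if_splits)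
    qed
    ultimately have "card N = 2" by simp
    then show ?thesis using cardeq by simp
  qed
qed

lemma even4:
  assumes "distinct [x1,x2,x3,x4]" "even (card ({x1,x2,x3,x4} \<inter> S))"
  shows "((x1\<in>S) = (x2\<in>S)) = ((x3\<in>S) = (x4\<in>S))"
  using assms by (cases "x1\<in>S"; cases "x2\<in>S"; cases "x3\<in>S"; cases "x4\<in>S") (auto simp: Int_insert_left card_insert_if)

lemma cut_exists:
  fixes S :: "edge set"
  assumes finS: "finite S"
    and par: "\<And>p q. even (card ({((p,q),False), ((p,q+1),False), ((p,q),True), ((p+1,q),True)} \<inter> S))"
  shows "\<exists>C. finite C \<and> (\<forall>e. e \<in> S \<longleftrightarrow> (fst e \<in> C \<longleftrightarrow> other_end e \<notin> C))"
proof -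
  obtain K :: int where K: "\<And>e. e \<in> S \<Longrightarrow> \<bar>fst (fst e)\<bar> < K \<and> \<bar>snd (fst e)\<bar> < K" and Kpos: "K > 0"
  proof -
    define img where "img = (\<lambda>e. \<bar>fst (fst e)\<bar> + \<bar>snd (fst e)\<bar>) ` S"
    have fi: "finite img" unfolding img_def using finS by simp
    define M where "M = Max (insert 0 img)"
    have "x \<le> M" if "x \<in> img" for x unfolding M_def using fi that by simp
    hence "\<And>e. e \<in> S \<Longrightarrow> \<bar>fst (fst e)\<bar> < M + 1 \<and> \<bar>snd (fst e)\<bar> < M + 1" unfolding img_def by force
    moreover have "0 \<le> M" unfolding M_def using fi by simp
    ultimately show ?thesis using that[of "M+1"] by simp
  qed
  define R where "R a b = {k. a \<le> k \<and> ((k,b),False) \<in> S}" for a b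
  define f where "f a b = odd (card (R a b))" for a b
  have finR: "finite (R a b)" for a b
  proof -
    have "R a b \<subseteq> (\<lambda>e. fst (fst e)) ` S" unfolding R_def by force
    thus ?thesis using finS finite_subset by blast
  qed
  have f1: "f a b = (f (a+1) b \<noteq> (((a,b),False) \<in> S))" for a b
  proof -
    have "R a b = (if ((a,b),False) \<in> S then insert a (R (a+1) b) else R (a+1) b)"
      unfolding R_def by (auto simp: le_less)
    moreover have "a \<notin> R (a+1) b" unfolding R_def by auto
    ultimately show ?thesis unfolding f_def using finR by auto
  qed
  have Rempty: "R a b = {}" if "a \<ge> K \<or> \<bar>b\<bar> \<ge> K" for a b
    using that K unfolding R_def by fastforce
  have fK: "\<not> f a b" if "a \<ge> K \<or> \<bar>b\<bar> \<ge> K" for a b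
    using Rempty[OF that] unfolding f_def by simp
  have vert_ge: "(f a q \<noteq> f a (q+1)) = (((a,q),True) \<in> S)" if "a \<ge> K" for a q
    using fK[of a q] fK[of a "q+1"] that K[of "((a,q),True)"] by auto
  have vert_n: "\<forall>a q. a = K - int n \<longrightarrow> (f a q \<noteq> f a (q+1)) = (((a,q),True) \<in> S)" for n
  proof (induction n)
    case 0 then show ?case using vert_ge by auto
  next
    case (Suc n)
    show ?case
    proof (intro allI impI)
      fix a q assume a: "a = K - int (Suc n)"
      have ih: "(f (a+1) q \<noteq> f (a+1) (q+1)) = (((a+1,q),True) \<in> S)" using Suc a by auto
      have e: "(((((a,q),False)\<in>S) = (((a,q+1),False)\<in>S)) = ((((a,q),True)\<in>S) = (((a+1,q),True)\<in>S)))"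
        by (rule even4) (use par[of a q] in auto)
      show "(f a q \<noteq> f a (q+1)) = (((a,q),True) \<in> S)"
        using f1[of a q] f1[of a "q+1"] ih e by auto
    qed
  qed
  have vert: "(f a q \<noteq> f a (q+1)) = (((a,q),True) \<in> S)" for a q
  proof (cases "a \<ge> K")
    case True then show ?thesis using vert_ge by auto
  next
    case False
    then have "a = K - int (nat (K - a))" by auto
    then show ?thesis using vert_n by blast
  qed
  have left_same: "f a b = f (-K) b" if "a \<le> -K" for a b
  proof -
    have "R a b = R (-K) b" unfolding R_def using K that by fastforce
    thus ?thesis unfolding f_def by simp
  qed
  have left_n: "\<forall>q. q = K - int n \<longrightarrow> \<not> f (-K) q" for n
  proof (induction n)
    case 0 then show ?case using fK Kpos by auto
  next
    case (Suc n)
    show ?case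
    proof (intro allI impI)
      fix q assume q: "q = K - int (Suc n)"
      have "((-K,q),True) \<notin> S" using K by force
      hence "f (-K) q = f (-K) (q+1)" using vert[of "-K" q] by auto
      moreover have "\<not> f (-K) (q+1)" using Suc q by auto
      ultimately show "\<not> f (-K) q" by simp
    qed
  qed
  have left: "\<not> f a b" if "a \<le> -K" for a b
  proof (cases "b \<ge> K")
    case True then have "\<bar>b\<bar> \<ge> K" using Kpos by auto
    then show ?thesis using fK[of a b] by auto
  next
    case False
    then have "b = K - int (nat (K - b))" by auto
    then show ?thesis using left_n left_same[OF that] by blast
  qed
  define C where "C = {x. f (fst x) (snd x)}"
  have "C \<subseteq> {-K..K} \<times> {-K..K}"
  proof
    fix x assume "x \<in> C"
    hence "f (fst x) (snd x)" unfolding C_def by auto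
    hence "\<not> (fst x \<ge> K \<or> \<bar>snd x\<bar> \<ge> K)" "\<not> fst x \<le> -K" using fK left by blast+
    thus "x \<in> {-K..K} \<times> {-K..K}" by (cases x) auto
  qed
  hence "finite C" by (rule finite_subset) auto
  moreover have "\<forall>e. e \<in> S \<longleftrightarrow> (fst e \<in> C \<longleftrightarrow> other_end e \<notin> C)"
  proof
    fix e :: edge
    obtain a b c where e: "e = ((a,b),c)" by (metis prod.collapse)
    show "e \<in> S \<longleftrightarrow> (fst e \<in> C \<longleftrightarrow> other_end e \<notin> C)"
    proof (cases c)
      case True
      then show ?thesis using vert[of a b] unfolding e C_def other_end_def by auto
    next
      case False
      then show ?thesis using f1[of a b] unfolding e C_def other_end_def by auto
    qed
  qed
  ultimately show ?thesis by blast
qed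

lemma card_cycle_edges:
  assumes cyc: "dual_cycle_list vs"
  shows "card (cycle_edges vs) = length vs"
proof -
  define L where "L = length vs"
  have L3: "L \<ge> 3" and dis: "distinct vs" and adj: "\<And>i. i < L \<Longrightarrow> dual_adj (vs ! i) (vs ! ((i + 1) mod L))"
    using cyc unfolding dual_cycle_list_def L_def by auto
  have ce: "cycle_edges vs = (\<lambda>i. dual_edge (vs ! i) (vs ! ((i + 1) mod L))) ` {..<L}"
    unfolding cycle_edges_def L_def by auto
  have sucmod: "\<And>i. i < L \<Longrightarrow> (i + 1) mod L = (if i + 1 = L then 0 else i + 1)" by simp
  have inj: "inj_on (\<lambda>i. dual_edge (vs ! i) (vs ! ((i + 1) mod L))) {..<L}"
  proof (rule inj_onI)
    fix i j assume i: "i \<in> {..<L}" and j: "j \<in> {..<L}"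
      and eq: "dual_edge (vs ! i) (vs ! ((i + 1) mod L)) = dual_edge (vs ! j) (vs ! ((j + 1) mod L))"
    have ii: "i < L" "(i+1) mod L < L" and jj: "j < L" "(j+1) mod L < L" using i j L3 by auto
    have nq: "\<And>a b. a < L \<Longrightarrow> b < L \<Longrightarrow> vs ! a = vs ! b \<longleftrightarrow> a = b"
      using dis unfolding L_def by (simp add: nth_eq_iff_index_eq)
    from dual_edge_inj[OF adj[OF ii(1)] adj[OF jj(1)] eq]
    have "(i = j \<and> (i+1) mod L = (j+1) mod L) \<or> (i = (j+1) mod L \<and> (i+1) mod L = j)"
      using nq ii jj by metis
    thus "i = j" using sucmod[OF ii(1)] sucmod[OF jj(1)] L3 ii jj by (auto split: if_splits)
  qed
  show ?thesis unfolding ce using card_image[OF inj] L_def by simp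
qed

definition walks :: "nat \<Rightarrow> vertex \<Rightarrow> vertex list set" where
  "walks m d = {xs. length xs = m \<and> (\<forall>k<m. dual_adj ((d#xs) ! k) ((d#xs) ! (k+1)))}"

lemma walks_Suc: "walks (Suc m) d = (\<Union>v\<in>nbrs d. (Cons v) ` walks m v)"
proof (intro set_eqI iffI)
  fix xs assume "xs \<in> walks (Suc m) d"
  then obtain v ys where xs: "xs = v # ys" and l: "length ys = m"
    and a: "\<forall>k<Suc m. dual_adj ((d#v#ys) ! k) ((d#v#ys) ! (k+1))"
    unfolding walks_def by (cases xs) auto
  have "dual_adj d v" using a by (metis nth_Cons_0 nth_Cons_Suc One_nat_def zero_less_Suc add_0)
  hence "v \<in> nbrs d" using dual_adj_iff by auto
  moreover have "ys \<in> walks m v" unfolding walks_def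
  proof (intro CollectI conjI allI impI)
    fix k assume "k < m"
    hence "dual_adj ((d#v#ys) ! Suc k) ((d#v#ys) ! (Suc k + 1))" using a by auto
    thus "dual_adj ((v # ys) ! k) ((v # ys) ! (k + 1))" by simp
  qed (use l in auto)
  ultimately show "xs \<in> (\<Union>v\<in>nbrs d. (Cons v) ` walks m v)" using xs by auto
next
  fix xs assume "xs \<in> (\<Union>v\<in>nbrs d. (Cons v) ` walks m v)"
  then obtain v ys where xs: "xs = v # ys" and v: "v \<in> nbrs d" and ys: "ys \<in> walks m v" by auto
  have "dual_adj ((d#v#ys) ! k) ((d#v#ys) ! (k+1))" if "k < Suc m" for k
  proof (cases k)
    case 0 then show ?thesis using v dual_adj_iff by auto
  next
    case (Suc k') then show ?thesis using ys that unfolding walks_def by auto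
  qed
  then show "xs \<in> walks (Suc m) d" using xs ys unfolding walks_def by auto
qed

lemma walks_card: "finite (walks m d) \<and> card (walks m d) \<le> 4 ^ m"
proof (induction m arbitrary: d)
  case 0
  have "walks 0 d = {[]}" unfolding walks_def by auto
  then show ?case by simp
next
  case (Suc m)
  have fin: "finite (walks (Suc m) d)" unfolding walks_Suc using Suc finite_nbrs by auto
  have "card (walks (Suc m) d) \<le> (\<Sum>v\<in>nbrs d. card ((Cons v) ` walks m v))"
    unfolding walks_Suc by (rule card_UN_le[OF finite_nbrs])
  also have "\<dots> \<le> (\<Sum>v\<in>nbrs d. 4 ^ m)"
    by (rule sum_mono) (meson Suc card_image_le le_trans)
  also have "\<dots> \<le> 4 * 4 ^ m" using card_nbrs by simp
  finally show ?case using fin by simp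
qed

lemma inj_rotate: "inj (rotate i)"
proof (induction i)
  case 0 then show ?case by simp
next
  case (Suc i)
  have "rotate (Suc i) = rotate1 \<circ> rotate i" by (auto simp: rotate_Suc)
  then show ?case using inj_compose[OF inj_rotate1 Suc] by metis
qed

definition cyc_lists :: "nat \<Rightarrow> vertex \<Rightarrow> vertex list set" where
  "cyc_lists n d = {vs. dual_cycle_list vs \<and> length vs = n \<and> d \<in> set vs}"

lemma cyc_lists_card: "finite (cyc_lists n d) \<and> card (cyc_lists n d) \<le> n * 4 ^ n"
proof -
  define T where "T = (Cons d) ` walks (n - 1) d"
  have fT: "finite T" and cT: "card T \<le> 4 ^ n"
  proof -
    show "finite T" unfolding T_def using walks_card by auto
    have "card T \<le> 4 ^ (n - 1)" unfolding T_def by (meson card_image_le walks_card le_trans)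
    also have "\<dots> \<le> 4 ^ n" by simp
    finally show "card T \<le> 4 ^ n" .
  qed
  have sub: "cyc_lists n d \<subseteq> (\<Union>i<n. rotate i -` T)"
  proof
    fix vs assume "vs \<in> cyc_lists n d"
    hence cyc: "dual_cycle_list vs" and L: "length vs = n" and dv: "d \<in> set vs" unfolding cyc_lists_def by auto
    have L3: "n \<ge> 3" and adj: "\<And>i. i < n \<Longrightarrow> dual_adj (vs ! i) (vs ! ((i + 1) mod n))"
      using cyc L unfolding dual_cycle_list_def by auto
    obtain i where i: "i < n" "vs ! i = d" using dv L by (auto simp: in_set_conv_nth)
    define r where "r = rotate i vs"
    have lr: "length r = n" unfolding r_def using L by simp
    have rn: "\<And>k. k < n \<Longrightarrow> r ! k = vs ! ((i + k) mod n)" unfolding r_def using L by (simp add: nth_rotate)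
    have r0: "r ! 0 = d" using rn[of 0] i L3 by simp
    have "r = d # tl r" using lr r0 L3 by (cases r) auto
    moreover have "tl r \<in> walks (n - 1) d"
    proof -
      have "length (tl r) = n - 1" using lr by simp
      moreover have "dual_adj ((d # tl r) ! k) ((d # tl r) ! (k+1))" if "k < n - 1" for k
      proof -
        have "(d # tl r) = r" using \<open>r = d # tl r\<close> by simp
        hence "(d # tl r) ! k = vs ! ((i + k) mod n)" "(d # tl r) ! (k+1) = vs ! ((i + (k+1)) mod n)"
          using rn that by auto
        moreover have "(i + (k+1)) mod n = ((i + k) mod n + 1) mod n" by (metis add.assoc mod_add_left_eq)
        moreover have "(i + k) mod n < n" using L3 by simp
        ultimately show ?thesis using adj by simp
      qed
      ultimately show ?thesis unfolding walks_def by auto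
    qed
    ultimately have "rotate i vs \<in> T" unfolding T_def r_def by (metis image_eqI)
    thus "vs \<in> (\<Union>i<n. rotate i -` T)" using i by auto
  qed
  have fin_pre: "finite (rotate i -` T)" and card_pre: "card (rotate i -` T) \<le> card T" for i
  proof -
    have inj: "inj_on (rotate i) (rotate i -` T)" using inj_rotate by (metis inj_on_subset subset_UNIV)
    have "rotate i ` (rotate i -` T) \<subseteq> T" by auto
    thus "finite (rotate i -` T)" using inj fT finite_imageD finite_subset by metis
    thus "card (rotate i -` T) \<le> card T" using card_inj_on_le[OF inj \<open>rotate i ` (rotate i -` T) \<subseteq> T\<close> fT] by simp
  qed
  have finU: "finite (\<Union>i<n. rotate i -` T)" using fin_pre by auto
  have "card (cyc_lists n d) \<le> card (\<Union>i<n. rotate i -` T)" using card_mono[OF finU sub] .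
  also have "\<dots> \<le> (\<Sum>i<n. card (rotate i -` T))" by (rule card_UN_le) simp
  also have "\<dots> \<le> (\<Sum>i<n. 4 ^ n)" by (rule sum_mono) (use card_pre cT le_trans in blast)
  also have "\<dots> = n * 4 ^ n" by simp
  finally show ?thesis using finite_subset[OF sub finU] by simp
qed

lemma gauss_1d:
  fixes \<beta> :: real
  assumes b: "\<beta> > 0"
  shows "(\<integral>\<^sup>+x. ennreal (exp (-2*\<beta>*\<bar>x\<bar>)) \<partial>(density lborel (normal_density 0 1))) \<le> ennreal (1/\<beta>)"
proof -
  define ed where "ed = exponential_density (2*\<beta>)"
  have edm[measurable]: "ed \<in> borel_measurable borel" unfolding ed_def by simp
  have int1: "(\<integral>\<^sup>+x. ennreal (ed x) \<partial>lborel) = 1"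
  proof -
    interpret prob_space "density lborel (\<lambda>x. ennreal (ed x))"
      unfolding ed_def using prob_space_exponential_density[of "2*\<beta>"] b by simp
    have "emeasure (density lborel (\<lambda>x. ennreal (ed x))) UNIV = 1" using emeasure_space_1 by simp
    thus ?thesis by (simp add: emeasure_density)
  qed
  have int2: "(\<integral>\<^sup>+x. ennreal (ed (-x)) \<partial>lborel) = 1"
  proof -
    have "(\<integral>\<^sup>+x. ennreal (ed x) \<partial>(distr lborel borel uminus)) = (\<integral>\<^sup>+x. ennreal (ed (-x)) \<partial>lborel)"
      by (rule nn_integral_distr) auto
    thus ?thesis using int1 lborel_distr_uminus by simp
  qed
  have "(\<integral>\<^sup>+x. ennreal (exp (-2*\<beta>*\<bar>x\<bar>)) \<partial>(density lborel (normal_density 0 1)))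
      = (\<integral>\<^sup>+x. ennreal (normal_density 0 1 x) * ennreal (exp (-2*\<beta>*\<bar>x\<bar>)) \<partial>lborel)"
    by (rule nn_integral_density) auto
  also have "\<dots> \<le> (\<integral>\<^sup>+x. ennreal (exp (-2*\<beta>*\<bar>x\<bar>)) \<partial>lborel)"
  proof (rule nn_integral_mono)
    fix x :: real
    have "normal_density 0 1 x \<le> 1"
    proof -
      have s: "sqrt (2*pi*1\<^sup>2) \<ge> 1" using pi_ge_two by simp
      have a: "1 / sqrt (2*pi*1\<^sup>2) \<le> 1" using s by (simp only: divide_le_eq_1) auto
      have b: "exp (-(x-0)\<^sup>2/(2*1\<^sup>2)) \<le> 1" by (simp only: exp_le_one_iff) simp
      show ?thesis unfolding normal_density_def by (rule mult_le_one[OF a _ b]) simp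
    qed
    hence "normal_density 0 1 x * exp (-2*\<beta>*\<bar>x\<bar>) \<le> exp (-2*\<beta>*\<bar>x\<bar>)"
      by (simp add: mult_left_le_one_le)
    thus "ennreal (normal_density 0 1 x) * ennreal (exp (-2*\<beta>*\<bar>x\<bar>)) \<le> ennreal (exp (-2*\<beta>*\<bar>x\<bar>))"
      by (simp add: ennreal_mult'[symmetric])
  qed
  also have "\<dots> \<le> (\<integral>\<^sup>+x. ennreal (1/(2*\<beta>)) * (ennreal (ed x) + ennreal (ed (-x))) \<partial>lborel)"
  proof (rule nn_integral_mono)
    fix x :: real
    have "exp (-2*\<beta>*\<bar>x\<bar>) \<le> (1/(2*\<beta>)) * (ed x + ed (-x))"
      unfolding ed_def exponential_density_def using b by (auto simp: abs_if)
    moreover have "ed x \<ge> 0" "ed (-x) \<ge> 0" unfolding ed_def using b exponential_density_nonneg by auto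
    ultimately show "ennreal (exp (-2*\<beta>*\<bar>x\<bar>)) \<le> ennreal (1/(2*\<beta>)) * (ennreal (ed x) + ennreal (ed (-x)))"
      using b by (simp add: ennreal_mult[symmetric] ennreal_plus[symmetric] del: ennreal_plus)
  qed
  also have "\<dots> = ennreal (1/(2*\<beta>)) * ((\<integral>\<^sup>+x. ennreal (ed x) \<partial>lborel) + (\<integral>\<^sup>+x. ennreal (ed (-x)) \<partial>lborel))"
    by (simp add: nn_integral_cmult nn_integral_add)
  also have "\<dots> = ennreal (1/(2*\<beta>)) * ennreal 2" using int1 int2 by (simp add: one_add_one)
  also have "\<dots> = ennreal (1/(2*\<beta>) * 2)" by (rule ennreal_mult[symmetric]) (use b in simp_all)
  also have "1/(2*\<beta>) * 2 = 1/\<beta>" by simp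
  finally show ?thesis .
qed

lemma space_W: "space W_M = UNIV"
  unfolding W_M_def by (simp add: space_PiM PiE_UNIV_domain)

lemma space_spin: "space (spin_M A) = PiE A (\<lambda>_. {-1, 1})"
  unfolding spin_M_def by (simp add: space_PiM)

lemma space_Omega: "space Omega_M = UNIV \<times> PiE UNIV (\<lambda>_. {-1, 1})"
  unfolding Omega_M_def by (simp add: space_pair_measure space_W space_spin)

lemma meas_coord_W[measurable]: "(\<lambda>w. w e) \<in> borel_measurable W_M"
  unfolding W_M_def by (rule measurable_component_singleton) simp

lemma meas_coord_spin: "x \<in> A \<Longrightarrow> (\<lambda>\<tau>. \<tau> x) \<in> borel_measurable (spin_M A)"
  unfolding spin_M_def
  by (rule measurable_compose[OF measurable_component_singleton]) auto

lemma meas_w[measurable]: "(\<lambda>\<omega>. fst \<omega> e) \<in> borel_measurable Omega_M"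
  unfolding Omega_M_def by (rule measurable_compose[OF measurable_fst meas_coord_W])

lemma meas_s[measurable]: "(\<lambda>\<omega>. snd \<omega> x) \<in> borel_measurable Omega_M"
  unfolding Omega_M_def by (rule measurable_compose[OF measurable_snd meas_coord_spin]) simp

lemma meas_glue[measurable]: "(\<lambda>\<omega>. glue C eta (snd \<omega>) x) \<in> borel_measurable Omega_M"
  unfolding glue_def by (cases "x \<in> C") simp_all

lemma meas_gibbs[measurable]: "(\<lambda>\<omega>. gibbs_prob \<beta> C (fst \<omega>) (snd \<omega>) eta) \<in> borel_measurable Omega_M"
  unfolding gibbs_prob_def energy_def by measurable

lemma meas_pw[measurable]: "(\<lambda>p. fst p e) \<in> borel_measurable (W_M \<Otimes>\<^sub>M spin_M A)"
  by (rule measurable_compose[OF measurable_fst meas_coord_W])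

lemma meas_pglue[measurable]: "(\<lambda>p. glue C eta (snd p) x) \<in> borel_measurable (W_M \<Otimes>\<^sub>M spin_M (- C))"
proof (cases "x \<in> C")
  case True then show ?thesis unfolding glue_def by simp
next
  case False
  then have e: "(\<lambda>p. glue C eta (snd p) x) = (\<lambda>p. snd p x)" unfolding glue_def by auto
  show ?thesis unfolding e
    by (rule measurable_compose[OF measurable_snd meas_coord_spin]) (use False in simp)
qed

lemma meas_proj[measurable]: "(\<lambda>\<omega>. (fst \<omega>, restrict (snd \<omega>) (- C))) \<in> measurable Omega_M (W_M \<Otimes>\<^sub>M spin_M (- C))"
proof -
  have "(\<lambda>\<omega>. restrict (snd \<omega>) (- C)) \<in> measurable Omega_M (spin_M (- C))"
    unfolding Omega_M_def spin_M_def
    by (rule measurable_compose[OF measurable_snd measurable_restrict_subset]) simp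
  then show ?thesis unfolding Omega_M_def by measurable
qed

lemma unsat_sets:
  assumes "finite S"
  shows "{\<omega> \<in> space Omega_M. \<forall>e\<in>S. unsatisfied \<omega> e} \<in> sets Omega_M"
  unfolding unsatisfied_def by (measurable; use assms in simp)

lemma meas_X[measurable]: "(\<lambda>\<omega>. exp (- 2 * \<beta> * (\<Sum>e\<in>S. \<bar>fst \<omega> e\<bar>))) \<in> borel_measurable Omega_M"
  by measurable

lemma finite_edges_touching:
  assumes "finite C" shows "finite (edges_touching C)"
proof -
  have "edges_touching C \<subseteq> (\<Union>x\<in>C. {(x,False),(x,True),((fst x - 1, snd x),False),((fst x, snd x - 1),True)})"
  proof
    fix e assume "e \<in> edges_touching C"
    then have h: "fst e \<in> C \<or> other_end e \<in> C" unfolding edges_touching_def by auto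
    obtain a b c where e: "e = ((a,b),c)" by (metis prod.collapse)
    show "e \<in> (\<Union>x\<in>C. {(x,False),(x,True),((fst x - 1, snd x),False),((fst x, snd x - 1),True)})"
    proof (cases c)
      case True
      then have "(a,b) \<in> C \<or> (a,b+1) \<in> C" using h unfolding e other_end_def by simp
      then show ?thesis
      proof
        assume "(a,b) \<in> C" then show ?thesis unfolding e using True by (intro UN_I[of "(a,b)"]) auto
      next
        assume "(a,b+1) \<in> C" then show ?thesis unfolding e using True by (intro UN_I[of "(a,b+1)"]) auto
      qed
    next
      case False
      then have "(a,b) \<in> C \<or> (a+1,b) \<in> C" using h unfolding e other_end_def by simp
      then show ?thesis
      proof
        assume "(a,b) \<in> C" then show ?thesis unfolding e using False by (intro UN_I[of "(a,b)"]) auto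
      next
        assume "(a+1,b) \<in> C" then show ?thesis unfolding e using False by (intro UN_I[of "(a+1,b)"]) auto
      qed
    qed
  qed
  moreover have "finite (\<Union>x\<in>C. {(x,False),(x,True),((fst x - 1, snd x),False),((fst x, snd x - 1),True)})"
    using assms by auto
  ultimately show ?thesis by (rule finite_subset)
qed

lemma sign_prod:
  fixes w a b :: real
  assumes "a \<in> {-1,1}" "b \<in> {-1,1}" "w * a * b < 0"
  shows "w * a * b = - \<bar>w\<bar>"
  using assms by (auto simp: abs_if split: if_splits)

lemma energy_flip:
  assumes fC: "finite C"
    and S: "\<And>e. e \<in> S \<longleftrightarrow> (fst e \<in> C \<longleftrightarrow> other_end e \<notin> C)"
    and eta: "\<And>x. x \<in> C \<Longrightarrow> eta x \<in> {-1,1}"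
    and tau: "\<And>x. tau x \<in> {-1,1}"
    and uns: "\<And>e. e \<in> S \<Longrightarrow> w e * glue C eta tau (fst e) * glue C eta tau (other_end e) < 0"
  shows "energy C w (glue C eta tau) = energy C w (glue C (\<lambda>x. - eta x) tau) - 2 * (\<Sum>e\<in>S. \<bar>w e\<bar>)"
proof -
  let ?g = "glue C eta tau" and ?h = "glue C (\<lambda>x. - eta x) tau"
  define ET where "ET = edges_touching C"
  have fET: "finite ET" unfolding ET_def using finite_edges_touching[OF fC] .
  have SET: "S \<subseteq> ET" unfolding ET_def edges_touching_def using S by auto
  have gv: "?g x \<in> {-1,1}" for x using eta tau unfolding glue_def by auto
  have inS: "w e * ?h (fst e) * ?h (other_end e) = - (w e * ?g (fst e) * ?g (other_end e))" if "e \<in> S" for e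
    using S[of e] that unfolding glue_def by auto
  have inS2: "w e * ?g (fst e) * ?g (other_end e) = - \<bar>w e\<bar>" if "e \<in> S" for e
    by (rule sign_prod[OF gv gv uns[OF that]])
  have notS: "w e * ?h (fst e) * ?h (other_end e) = w e * ?g (fst e) * ?g (other_end e)" if "e \<in> ET - S" for e
  proof -
    have "fst e \<in> C" "other_end e \<in> C" using that S[of e] unfolding ET_def edges_touching_def by auto
    then show ?thesis unfolding glue_def by simp
  qed
  have "energy C w ?h = (\<Sum>e\<in>S. w e * ?h (fst e) * ?h (other_end e)) + (\<Sum>e\<in>ET - S. w e * ?h (fst e) * ?h (other_end e))"
    unfolding energy_def ET_def[symmetric] using sum.subset_diff[OF SET fET] by (simp add: add.commute)
  also have "\<dots> = (\<Sum>e\<in>S. \<bar>w e\<bar>) + (\<Sum>e\<in>ET - S. w e * ?g (fst e) * ?g (other_end e))"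
  proof -
    have s1: "(\<Sum>e\<in>S. w e * ?h (fst e) * ?h (other_end e)) = (\<Sum>e\<in>S. \<bar>w e\<bar>)"
      using inS inS2 by simp
    have s2: "(\<Sum>e\<in>ET - S. w e * ?h (fst e) * ?h (other_end e)) = (\<Sum>e\<in>ET - S. w e * ?g (fst e) * ?g (other_end e))"
      by (rule sum.cong[OF refl notS])
    show ?thesis using s1 s2 by simp
  qed
  finally have h: "energy C w ?h = (\<Sum>e\<in>S. \<bar>w e\<bar>) + (\<Sum>e\<in>ET - S. w e * ?g (fst e) * ?g (other_end e))" .
  have "energy C w ?g = (\<Sum>e\<in>S. w e * ?g (fst e) * ?g (other_end e)) + (\<Sum>e\<in>ET - S. w e * ?g (fst e) * ?g (other_end e))"
    unfolding energy_def ET_def[symmetric] using sum.subset_diff[OF SET fET] by (simp add: add.commute)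
  also have "\<dots> = - (\<Sum>e\<in>S. \<bar>w e\<bar>) + (\<Sum>e\<in>ET - S. w e * ?g (fst e) * ?g (other_end e))"
    using inS2 by (simp add: sum_negf)
  finally show ?thesis using h by simp
qed

lemma gibbs_flip:
  assumes fC: "finite C"
    and S: "\<And>e. e \<in> S \<longleftrightarrow> (fst e \<in> C \<longleftrightarrow> other_end e \<notin> C)"
    and eta: "\<And>x. x \<in> C \<Longrightarrow> eta x \<in> {-1,1}"
    and tau: "\<And>x. tau x \<in> {-1,1}"
    and uns: "\<And>e. e \<in> S \<Longrightarrow> w e * glue C eta tau (fst e) * glue C eta tau (other_end e) < 0"
  shows "gibbs_prob \<beta> C w tau eta = exp (- 2 * \<beta> * (\<Sum>e\<in>S. \<bar>w e\<bar>)) * gibbs_prob \<beta> C w tau (\<lambda>x. - eta x)"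
proof -
  have E: "energy C w (glue C eta tau) = energy C w (glue C (\<lambda>x. - eta x) tau) - 2 * (\<Sum>e\<in>S. \<bar>w e\<bar>)"
    by (rule energy_flip[OF assms])
  have a: "\<beta> * (energy C w (glue C (\<lambda>x. - eta x) tau) - 2 * (\<Sum>e\<in>S. \<bar>w e\<bar>)) = - 2 * \<beta> * (\<Sum>e\<in>S. \<bar>w e\<bar>) + \<beta> * energy C w (glue C (\<lambda>x. - eta x) tau)"
    by (simp add: algebra_simps)
  have "exp (\<beta> * energy C w (glue C eta tau)) = exp (- 2 * \<beta> * (\<Sum>e\<in>S. \<bar>w e\<bar>)) * exp (\<beta> * energy C w (glue C (\<lambda>x. - eta x) tau))"
    unfolding E a exp_add by simp
  then show ?thesis unfolding gibbs_prob_def by simp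
qed

lemma gibbs_nonneg: "gibbs_prob \<beta> C w tau eta \<ge> 0"
  unfolding gibbs_prob_def by (auto intro!: divide_nonneg_nonneg sum_nonneg)

lemma glue_restrict: "glue C (restrict eta C) tau = glue C eta tau"
  unfolding glue_def by auto

lemma gibbs_sum:
  assumes fC: "finite C"
  shows "(\<Sum>eta\<in>PiE C (\<lambda>_. {-1,1}). gibbs_prob \<beta> C w tau eta) = 1"
proof -
  let ?P = "PiE C (\<lambda>_. {-1::real,1})"
  have fin: "finite ?P" using fC by (simp add: finite_PiE)
  have ne: "?P \<noteq> {}" by (simp add: PiE_eq_empty_iff)
  have pos: "(\<Sum>xi\<in>?P. exp (\<beta> * energy C w (glue C xi tau))) > 0"
    using fin ne by (intro sum_pos) auto
  show ?thesis unfolding gibbs_prob_def using pos by (simp add: sum_divide_distrib[symmetric])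
qed

lemma gibbs_sum_neg:
  assumes fC: "finite C"
  shows "(\<Sum>eta\<in>PiE C (\<lambda>_. {-1,1}). gibbs_prob \<beta> C w tau (\<lambda>x. - eta x)) = 1"
proof -
  let ?P = "PiE C (\<lambda>_. {-1::real,1})"
  let ?n = "\<lambda>eta. restrict (\<lambda>x. - eta x) C"
  have g: "gibbs_prob \<beta> C w tau (\<lambda>x. - eta x) = gibbs_prob \<beta> C w tau (?n eta)" for eta
    unfolding gibbs_prob_def by (simp only: glue_restrict)
  have bij: "bij_betw ?n ?P ?P"
  proof (rule bij_betwI[where g = ?n])
    show "?n \<in> ?P \<rightarrow> ?P" by auto
    show "?n \<in> ?P \<rightarrow> ?P" by auto
    show "?n (?n x) = x" if "x \<in> ?P" for x using that by (auto simp: restrict_def PiE_def extensional_def)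
    show "?n (?n x) = x" if "x \<in> ?P" for x using that by (auto simp: restrict_def PiE_def extensional_def)
  qed
  have "(\<Sum>eta\<in>?P. gibbs_prob \<beta> C w tau (\<lambda>x. - eta x)) = (\<Sum>eta\<in>?P. gibbs_prob \<beta> C w tau (?n eta))"
    using g by simp
  also have "\<dots> = (\<Sum>eta\<in>?P. gibbs_prob \<beta> C w tau eta)"
    using sum.reindex_bij_betw[OF bij, of "gibbs_prob \<beta> C w tau"] by simp
  also have "\<dots> = 1" by (rule gibbs_sum[OF fC])
  finally show ?thesis .
qed

lemma unsat_bound:
  assumes EA: "EA_dist \<beta> \<nu>" and b0: "\<beta> \<ge> 0" and fC: "finite C"
    and S: "\<And>e. e \<in> S \<longleftrightarrow> (fst e \<in> C \<longleftrightarrow> other_end e \<notin> C)"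
  shows "measure \<nu> {\<omega> \<in> space \<nu>. \<forall>e\<in>S. unsatisfied \<omega> e} \<le> (\<integral>\<omega>. exp (- 2 * \<beta> * (\<Sum>e\<in>S. \<bar>fst \<omega> e\<bar>)) \<partial>\<nu>)"
proof -
  have ps: "prob_space \<nu>" and se: "sets \<nu> = sets Omega_M"
    and DLR: "\<And>C. finite C \<Longrightarrow> (\<forall>eta \<in> PiE C (\<lambda>_. {-1, 1}). \<forall>B \<in> sets (W_M \<Otimes>\<^sub>M spin_M (- C)).
          measure \<nu> {\<omega> \<in> space \<nu>. (\<forall>x\<in>C. snd \<omega> x = eta x) \<and>
                                    (fst \<omega>, restrict (snd \<omega>) (- C)) \<in> B}
          = (\<integral>\<omega>. indicator {\<omega> \<in> space \<nu>. (fst \<omega>, restrict (snd \<omega>) (- C)) \<in> B} \<omega>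
                   * gibbs_prob \<beta> C (fst \<omega>) (snd \<omega>) eta \<partial>\<nu>))"
    using EA unfolding EA_dist_def by blast+
  interpret prob_space \<nu> by (rule ps)
  have sp: "space \<nu> = space Omega_M" using se by (rule sets_eq_imp_space_eq)
  have mc: "\<And>N. measurable \<nu> N = measurable Omega_M N" by (rule measurable_cong_sets[OF se refl])
  have spv: "snd \<omega> x \<in> {-1,1}" if "\<omega> \<in> space \<nu>" for \<omega> x
  proof -
    have "snd \<omega> \<in> PiE UNIV (\<lambda>_. {-1::real,1})" using that unfolding sp space_Omega by (auto simp: mem_Times_iff)
    then show ?thesis by (rule PiE_mem) simp
  qed
  have finS: "finite S"
  proof -
    have "S \<subseteq> edges_touching C" unfolding edges_touching_def using S by auto
    thus ?thesis using finite_edges_touching[OF fC] finite_subset by blast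
  qed
  define PE where "PE = PiE C (\<lambda>_. {-1::real, 1})"
  have finPE: "finite PE" unfolding PE_def using fC by (simp add: finite_PiE)
  define M2 where "M2 = W_M \<Otimes>\<^sub>M spin_M (- C)"
  define Bs where "Bs eta = {p \<in> space M2. \<forall>e\<in>S. fst p e * glue C eta (snd p) (fst e) * glue C eta (snd p) (other_end e) < 0}" for eta
  have Bs_sets: "Bs eta \<in> sets M2" for eta
    unfolding Bs_def M2_def by (measurable; use finS in simp)
  define Ev where "Ev eta = {\<omega> \<in> space \<nu>. (\<forall>x\<in>C. snd \<omega> x = eta x) \<and> (fst \<omega>, restrict (snd \<omega>) (- C)) \<in> Bs eta}" for eta
  have predB: "Measurable.pred Omega_M (\<lambda>\<omega>. (fst \<omega>, restrict (snd \<omega>) (- C)) \<in> Bs eta)" for eta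
    using pred_sets2[OF Bs_sets[of eta, unfolded M2_def] meas_proj[of C]] by simp
  have Ev_sets: "Ev eta \<in> sets \<nu>" for eta
    unfolding Ev_def sp se using predB[of eta] fC by measurable
  define Iset where "Iset eta = {\<omega> \<in> space \<nu>. (fst \<omega>, restrict (snd \<omega>) (- C)) \<in> Bs eta}" for eta
  have Iset_sets: "Iset eta \<in> sets \<nu>" for eta
    unfolding Iset_def sp se using predB[of eta] by measurable
  define G where "G eta \<omega> = gibbs_prob \<beta> C (fst \<omega>) (snd \<omega>) eta" for eta \<omega>
  define X where "X (\<omega>::config) = exp (- 2 * \<beta> * (\<Sum>e\<in>S. \<bar>fst \<omega> e\<bar>))" for \<omega>
  have G_meas: "G eta \<in> borel_measurable \<nu>" for eta unfolding G_def mc by measurable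
  have X_meas: "X \<in> borel_measurable \<nu>" unfolding X_def mc by measurable
  have G_nn: "G eta \<omega> \<ge> 0" for eta \<omega> unfolding G_def by (rule gibbs_nonneg)
  have G_le1: "G eta \<omega> \<le> 1" if "eta \<in> PE" for eta \<omega>
  proof -
    have "G eta \<omega> \<le> (\<Sum>eta\<in>PE. G eta \<omega>)"
      by (rule member_le_sum[OF that]) (use G_nn finPE in auto)
    also have "\<dots> = 1" unfolding G_def PE_def by (rule gibbs_sum[OF fC])
    finally show ?thesis .
  qed
  have Gn_le1: "G (\<lambda>x. - eta x) \<omega> \<le> 1" if "eta \<in> PE" for eta \<omega>
  proof -
    have "G (\<lambda>x. - eta x) \<omega> \<le> (\<Sum>eta\<in>PE. G (\<lambda>x. - eta x) \<omega>)"
      by (rule member_le_sum[OF that]) (use G_nn finPE in auto)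
    also have "\<dots> = 1" unfolding G_def PE_def by (rule gibbs_sum_neg[OF fC])
    finally show ?thesis .
  qed
  have X_nn: "X \<omega> \<ge> 0" for \<omega> unfolding X_def by simp
  have X_le1: "X \<omega> \<le> 1" for \<omega>
    unfolding X_def using b0 by (simp add: sum_nonneg mult_nonneg_nonneg)
  have cover: "{\<omega> \<in> space \<nu>. \<forall>e\<in>S. unsatisfied \<omega> e} \<subseteq> (\<Union>eta\<in>PE. Ev eta)"
  proof
    fix \<omega> assume \<omega>: "\<omega> \<in> {\<omega> \<in> space \<nu>. \<forall>e\<in>S. unsatisfied \<omega> e}"
    define eta where "eta = restrict (snd \<omega>) C"
    have eta_PE: "eta \<in> PE" unfolding eta_def PE_def using spv \<omega> by auto
    have gl: "glue C eta (restrict (snd \<omega>) (- C)) = snd \<omega>" unfolding glue_def eta_def by auto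
    have inM2: "(fst \<omega>, restrict (snd \<omega>) (- C)) \<in> space M2"
      unfolding M2_def using spv \<omega> by (auto simp: space_pair_measure space_W space_spin)
    have "(fst \<omega>, restrict (snd \<omega>) (- C)) \<in> Bs eta"
      unfolding Bs_def using inM2 \<omega> gl by (auto simp: unsatisfied_def)
    then have "\<omega> \<in> Ev eta" unfolding Ev_def eta_def using \<omega> by auto
    then show "\<omega> \<in> (\<Union>eta\<in>PE. Ev eta)" using eta_PE by auto
  qed
  have pw: "indicator (Iset eta) \<omega> * G eta \<omega> \<le> X \<omega> * G (\<lambda>x. - eta x) \<omega>" if "eta \<in> PE" "\<omega> \<in> space \<nu>" for eta \<omega>
  proof (cases "\<omega> \<in> Iset eta")
    case False then show ?thesis using X_nn G_nn by simp
  next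
    case True
    have gl: "glue C eta (restrict (snd \<omega>) (- C)) = glue C eta (snd \<omega>)" unfolding glue_def by auto
    have uns: "\<And>e. e \<in> S \<Longrightarrow> fst \<omega> e * glue C eta (snd \<omega>) (fst e) * glue C eta (snd \<omega>) (other_end e) < 0"
      using True unfolding Iset_def Bs_def by (simp add: gl)
    have eta: "\<And>x. x \<in> C \<Longrightarrow> eta x \<in> {-1,1}" using that(1) unfolding PE_def by auto
    have "G eta \<omega> = X \<omega> * G (\<lambda>x. - eta x) \<omega>"
      unfolding G_def X_def by (rule gibbs_flip[OF fC S eta spv[OF that(2)] uns])
    then show ?thesis using True by simp
  qed
  have int_I: "integrable \<nu> (\<lambda>\<omega>. indicator (Iset eta) \<omega> * G eta \<omega>)" if "eta \<in> PE" for eta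
  proof (rule integrable_const_bound[where B = 1])
    show "AE x in \<nu>. norm (indicator (Iset eta) x * G eta x) \<le> 1"
      using G_nn G_le1[OF that] by (auto simp: indicator_def)
    show "(\<lambda>\<omega>. indicator (Iset eta) \<omega> * G eta \<omega>) \<in> borel_measurable \<nu>"
      using G_meas Iset_sets by measurable
  qed
  have int_X: "integrable \<nu> (\<lambda>\<omega>. X \<omega> * G (\<lambda>x. - eta x) \<omega>)" if "eta \<in> PE" for eta
  proof (rule integrable_const_bound[where B = 1])
    show "AE x in \<nu>. norm (X x * G (\<lambda>x. - eta x) x) \<le> 1"
      using G_nn Gn_le1[OF that] X_nn X_le1 by (auto intro!: mult_le_one)
    show "(\<lambda>\<omega>. X \<omega> * G (\<lambda>x. - eta x) \<omega>) \<in> borel_measurable \<nu>"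
      using G_meas X_meas by measurable
  qed
  have "measure \<nu> {\<omega> \<in> space \<nu>. \<forall>e\<in>S. unsatisfied \<omega> e} \<le> measure \<nu> (\<Union>eta\<in>PE. Ev eta)"
    by (rule finite_measure_mono[OF cover]) (use finPE Ev_sets in auto)
  also have "\<dots> \<le> (\<Sum>eta\<in>PE. measure \<nu> (Ev eta))"
    by (rule measure_UNION_le[OF finPE Ev_sets])
  also have "\<dots> = (\<Sum>eta\<in>PE. \<integral>\<omega>. indicator (Iset eta) \<omega> * G eta \<omega> \<partial>\<nu>)"
  proof (rule sum.cong[OF refl])
    fix eta assume eta: "eta \<in> PE"
    have "Bs eta \<in> sets (W_M \<Otimes>\<^sub>M spin_M (- C))" using Bs_sets M2_def by simp
    then show "measure \<nu> (Ev eta) = (\<integral>\<omega>. indicator (Iset eta) \<omega> * G eta \<omega> \<partial>\<nu>)"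
      using DLR[OF fC] eta unfolding Ev_def Iset_def G_def PE_def by blast
  qed
  also have "\<dots> \<le> (\<Sum>eta\<in>PE. \<integral>\<omega>. X \<omega> * G (\<lambda>x. - eta x) \<omega> \<partial>\<nu>)"
    by (rule sum_mono, rule integral_mono) (use int_I int_X pw in auto)
  also have "\<dots> = (\<integral>\<omega>. (\<Sum>eta\<in>PE. X \<omega> * G (\<lambda>x. - eta x) \<omega>) \<partial>\<nu>)"
    by (rule sym, rule Bochner_Integration.integral_sum[where I=PE and M=\<nu> and f="\<lambda>eta \<omega>. X \<omega> * G (\<lambda>x. - eta x) \<omega>"]) (use int_X in auto)
  also have "\<dots> = (\<integral>\<omega>. X \<omega> \<partial>\<nu>)"
  proof (rule Bochner_Integration.integral_cong[OF refl])
    fix \<omega> assume "\<omega> \<in> space \<nu>"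
    have "(\<Sum>eta\<in>PE. X \<omega> * G (\<lambda>x. - eta x) \<omega>) = X \<omega> * (\<Sum>eta\<in>PE. G (\<lambda>x. - eta x) \<omega>)"
      by (simp add: sum_distrib_left)
    also have "(\<Sum>eta\<in>PE. G (\<lambda>x. - eta x) \<omega>) = 1" unfolding G_def PE_def by (rule gibbs_sum_neg[OF fC])
    finally show "(\<Sum>eta\<in>PE. X \<omega> * G (\<lambda>x. - eta x) \<omega>) = X \<omega>" by simp
  qed
  finally show ?thesis unfolding X_def .
qed

abbreviation "NM \<equiv> density lborel (\<lambda>x. ennreal (normal_density 0 1 x))"

lemma gauss_iid_eq: "gauss_iid = PiM (UNIV::edge set) (\<lambda>_. NM)"
  unfolding gauss_iid_def by simp

lemma prob_NM: "prob_space NM" by (rule prob_space_normal_density) simp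

interpretation GP: product_prob_space "\<lambda>_::edge. NM" "UNIV"
proof -
  show "product_prob_space (\<lambda>_::edge. NM)"
    unfolding product_prob_space_def product_prob_space_axioms_def product_sigma_finite_def
    using prob_NM prob_space_imp_sigma_finite by blast
qed

lemma gauss_prod:
  fixes \<beta> :: real
  assumes b: "\<beta> > 0" and finS: "finite S"
  shows "(\<integral>\<^sup>+w. ennreal (exp (- 2 * \<beta> * (\<Sum>e\<in>S. \<bar>w e\<bar>))) \<partial>gauss_iid) \<le> ennreal ((1/\<beta>) ^ card S)"
proof -
  have eq1: "ennreal (exp (- 2 * \<beta> * (\<Sum>e\<in>S. \<bar>w e\<bar>))) = (\<Prod>e\<in>S. ennreal (exp (- 2 * \<beta> * \<bar>w e\<bar>)))" for w :: "edge \<Rightarrow> real"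
  proof -
    have "exp (- 2 * \<beta> * (\<Sum>e\<in>S. \<bar>w e\<bar>)) = (\<Prod>e\<in>S. exp (- 2 * \<beta> * \<bar>w e\<bar>))"
      using finS by (simp add: sum_distrib_left exp_sum)
    then show ?thesis by (simp add: prod_ennreal)
  qed
  have "(\<integral>\<^sup>+w. ennreal (exp (- 2 * \<beta> * (\<Sum>e\<in>S. \<bar>w e\<bar>))) \<partial>gauss_iid)
      = (\<integral>\<^sup>+w. (\<Prod>e\<in>S. ennreal (exp (- 2 * \<beta> * \<bar>w e\<bar>))) \<partial>PiM UNIV (\<lambda>_. NM))"
    unfolding gauss_iid_eq eq1 ..
  also have "\<dots> = (\<integral>\<^sup>+w. (\<Prod>e\<in>S. ennreal (exp (- 2 * \<beta> * \<bar>w e\<bar>))) \<partial>distr (PiM UNIV (\<lambda>_. NM)) (PiM S (\<lambda>_. NM)) (\<lambda>x. restrict x S))"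
  proof -
    have pm: "(\<lambda>w. \<Prod>e\<in>S. ennreal (exp (- 2 * \<beta> * \<bar>w e\<bar>))) \<in> borel_measurable (PiM S (\<lambda>_. NM))"
    proof (rule borel_measurable_prod_ennreal)
      fix e assume "e \<in> S"
      show "(\<lambda>w. ennreal (exp (- 2 * \<beta> * \<bar>w e\<bar>))) \<in> borel_measurable (PiM S (\<lambda>_. NM))"
        by (rule measurable_compose[OF measurable_component_singleton[OF \<open>e \<in> S\<close>]]) simp
    qed
    have "(\<integral>\<^sup>+w. (\<Prod>e\<in>S. ennreal (exp (- 2 * \<beta> * \<bar>w e\<bar>))) \<partial>distr (PiM UNIV (\<lambda>_. NM)) (PiM S (\<lambda>_. NM)) (\<lambda>x. restrict x S))
        = (\<integral>\<^sup>+w. (\<Prod>e\<in>S. ennreal (exp (- 2 * \<beta> * \<bar>restrict w S e\<bar>))) \<partial>PiM UNIV (\<lambda>_. NM))"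
      by (rule nn_integral_distr[OF measurable_restrict_subset], simp, subst measurable_distr_eq1, rule pm)
    also have "\<dots> = (\<integral>\<^sup>+w. (\<Prod>e\<in>S. ennreal (exp (- 2 * \<beta> * \<bar>w e\<bar>))) \<partial>PiM UNIV (\<lambda>_. NM))"
      by (intro nn_integral_cong prod.cong) auto
    finally show ?thesis by simp
  qed
  also have "\<dots> = (\<integral>\<^sup>+w. (\<Prod>e\<in>S. ennreal (exp (- 2 * \<beta> * \<bar>w e\<bar>))) \<partial>PiM S (\<lambda>_. NM))"
    using GP.distr_PiM_restrict_finite[OF finS] by simp
  also have "\<dots> = (\<Prod>e\<in>S. (\<integral>\<^sup>+x. ennreal (exp (- 2 * \<beta> * \<bar>x\<bar>)) \<partial>NM))"
    by (rule GP.product_nn_integral_prod[OF finS, where f = "\<lambda>_ x. ennreal (exp (- 2 * \<beta> * \<bar>x\<bar>))"]) simp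
  also have "\<dots> \<le> (\<Prod>e\<in>S. ennreal (1/\<beta>))"
    by (rule prod_mono_ennreal) (use gauss_1d[OF b] in simp)
  also have "\<dots> = ennreal ((1/\<beta>) ^ card S)"
    using b by (simp add: ennreal_power)
  finally show ?thesis .
qed

lemma X_bound:
  assumes EA: "EA_dist \<beta> \<nu>" and b: "\<beta> > 0" and finS: "finite S"
  shows "(\<integral>\<omega>. exp (- 2 * \<beta> * (\<Sum>e\<in>S. \<bar>fst \<omega> e\<bar>)) \<partial>\<nu>) \<le> (1/\<beta>) ^ card S"
proof -
  have se: "sets \<nu> = sets Omega_M" and dist: "distr \<nu> W_M fst = gauss_iid"
    using EA unfolding EA_dist_def by blast+
  have mf: "fst \<in> measurable \<nu> W_M"
    unfolding measurable_cong_sets[OF se refl] Omega_M_def by (rule measurable_fst)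
  define f where "f w = exp (- 2 * \<beta> * (\<Sum>e\<in>S. \<bar>w e\<bar>))" for w :: "edge \<Rightarrow> real"
  have fm: "f \<in> borel_measurable W_M" unfolding f_def by measurable
  have sg: "sets gauss_iid = sets W_M" by (metis dist sets_distr)
  have fm2: "f \<in> borel_measurable gauss_iid" unfolding measurable_cong_sets[OF sg refl] by (rule fm)
  have "(\<integral>\<omega>. f (fst \<omega>) \<partial>\<nu>) = (\<integral>w. f w \<partial>distr \<nu> W_M fst)"
    by (rule integral_distr[symmetric, OF mf fm])
  also have "\<dots> = (\<integral>w. f w \<partial>gauss_iid)" using dist by simp
  also have "\<dots> = enn2real (\<integral>\<^sup>+w. ennreal (f w) \<partial>gauss_iid)"
    by (rule integral_eq_nn_integral[OF fm2]) (simp add: f_def)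
  also have "\<dots> \<le> (1/\<beta>) ^ card S"
    by (rule enn2real_leI) (use gauss_prod[OF b finS] b in \<open>simp_all add: f_def\<close>)
  finally show ?thesis unfolding f_def .
qed

lemma cycle_cut:
  assumes "dual_cycle_list vs"
  shows "\<exists>C. finite C \<and> (\<forall>e. e \<in> cycle_edges vs \<longleftrightarrow> (fst e \<in> C \<longleftrightarrow> other_end e \<notin> C))"
proof (rule cut_exists)
  show "finite (cycle_edges vs)" unfolding cycle_edges_def by simp
  fix p q
  have "plaq (p,q) = {((p,q),False), ((p,q+1),False), ((p,q),True), ((p+1,q),True)}"
    unfolding plaq_def by simp
  then show "even (card ({((p,q),False), ((p,q+1),False), ((p,q),True), ((p+1,q),True)} \<inter> cycle_edges vs))"
    using cycle_parity[OF assms, of "(p,q)"] by simp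
qed

lemma cycle_prob:
  assumes EA: "EA_dist \<beta> \<nu>" and b: "\<beta> > 0" and cyc: "dual_cycle_list vs"
  shows "measure \<nu> {\<omega> \<in> space \<nu>. \<forall>e\<in>cycle_edges vs. unsatisfied \<omega> e} \<le> (1/\<beta>) ^ length vs"
proof -
  obtain C where fC: "finite C" and S: "\<And>e. e \<in> cycle_edges vs \<longleftrightarrow> (fst e \<in> C \<longleftrightarrow> other_end e \<notin> C)"
    using cycle_cut[OF cyc] by blast
  have "measure \<nu> {\<omega> \<in> space \<nu>. \<forall>e\<in>cycle_edges vs. unsatisfied \<omega> e}
      \<le> (\<integral>\<omega>. exp (- 2 * \<beta> * (\<Sum>e\<in>cycle_edges vs. \<bar>fst \<omega> e\<bar>)) \<partial>\<nu>)"
    by (rule unsat_bound[OF EA _ fC S]) (use b in simp)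
  also have "\<dots> \<le> (1/\<beta>) ^ card (cycle_edges vs)"
    by (rule X_bound[OF EA b]) (simp add: cycle_edges_def)
  also have "card (cycle_edges vs) = length vs" by (rule card_cycle_edges[OF cyc])
  finally show ?thesis .
qed

theorem lemma2p6:
  shows "\<exists>\<beta>0 > 0. \<forall>\<beta> > \<beta>0. \<forall>\<nu>. EA_dist \<beta> \<nu> \<and> translation_invariant \<nu> \<longrightarrow>
     (AE \<omega> in \<nu>. \<forall>d. finite {S. dual_cycle_through d S \<and> (\<forall>e\<in>S. unsatisfied \<omega> e)})"
proof (intro exI[of _ 8] conjI allI impI)
  show "(8::real) > 0" by simp
  fix \<beta> :: real and \<nu> assume b8: "\<beta> > 8" and H: "EA_dist \<beta> \<nu> \<and> translation_invariant \<nu>"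
  have EA: "EA_dist \<beta> \<nu>" using H by blast
  have b: "\<beta> > 0" using b8 by simp
  have ps: "prob_space \<nu>" and se: "sets \<nu> = sets Omega_M" using EA unfolding EA_dist_def by blast+
  interpret prob_space \<nu> by (rule ps)
  have sp: "space \<nu> = space Omega_M" using se by (rule sets_eq_imp_space_eq)
  define U where "U S = {\<omega> \<in> space \<nu>. \<forall>e\<in>S. unsatisfied \<omega> e}" for S
  have U_sets: "U S \<in> sets \<nu>" if "finite S" for S
    unfolding U_def sp se by (rule unsat_sets[OF that])
  have "\<forall>d. AE \<omega> in \<nu>. finite {S. dual_cycle_through d S \<and> (\<forall>e\<in>S. unsatisfied \<omega> e)}"
  proof
    fix d
    define A where "A n = (\<Union>vs\<in>cyc_lists n d. U (cycle_edges vs))" for n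
    have fin_ce: "finite (cycle_edges vs)" for vs unfolding cycle_edges_def by simp
    have A_sets: "A n \<in> sets \<nu>" for n
      unfolding A_def using cyc_lists_card[of n d] U_sets[OF fin_ce] by auto
    have A_bound: "measure \<nu> (A n) \<le> (8/\<beta>) ^ n" for n
    proof -
      have "measure \<nu> (A n) \<le> (\<Sum>vs\<in>cyc_lists n d. measure \<nu> (U (cycle_edges vs)))"
        unfolding A_def by (rule measure_UNION_le) (use cyc_lists_card[of n d] U_sets[OF fin_ce] in auto)
      also have "\<dots> \<le> (\<Sum>vs\<in>cyc_lists n d. (1/\<beta>) ^ n)"
      proof (rule sum_mono)
        fix vs assume "vs \<in> cyc_lists n d"
        then have cyc: "dual_cycle_list vs" and l: "length vs = n" unfolding cyc_lists_def by auto
        show "measure \<nu> (U (cycle_edges vs)) \<le> (1/\<beta>) ^ n"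
          using cycle_prob[OF EA b cyc] l unfolding U_def by simp
      qed
      also have "\<dots> = real (card (cyc_lists n d)) * (1/\<beta>) ^ n" by simp
      also have "\<dots> \<le> real (n * 4 ^ n) * (1/\<beta>) ^ n"
      proof (rule mult_right_mono)
        show "real (card (cyc_lists n d)) \<le> real (n * 4 ^ n)"
          using cyc_lists_card[of n d] by (simp only: of_nat_le_iff)
      qed (use b in simp)
      also have "\<dots> \<le> real (2 ^ n * 4 ^ n) * (1/\<beta>) ^ n"
      proof (rule mult_right_mono)
        have "n < 2 ^ n" by (rule less_exp)
        then show "real (n * 4 ^ n) \<le> real (2 ^ n * 4 ^ n)" by simp
      qed (use b in simp)
      also have "\<dots> = (8/\<beta>) ^ n"
        by (simp add: power_mult_distrib[symmetric] power_divide)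
      finally show ?thesis .
    qed
    have summ: "summable (\<lambda>n. measure \<nu> (A n))"
    proof (rule summable_comparison_test'[where g = "\<lambda>n. (8/\<beta>) ^ n"])
      show "summable (\<lambda>n. (8/\<beta>) ^ n)" using b b8 by (intro summable_geometric) simp
      show "norm (measure \<nu> (A n)) \<le> (8/\<beta>) ^ n" for n using A_bound[of n] by simp
    qed
    have "AE \<omega> in \<nu>. eventually (\<lambda>n. \<omega> \<in> space \<nu> - A n) sequentially"
      by (rule borel_cantelli_AE1[OF A_sets _ summ]) (simp add: emeasure_eq_measure)
    then show "AE \<omega> in \<nu>. finite {S. dual_cycle_through d S \<and> (\<forall>e\<in>S. unsatisfied \<omega> e)}"
    proof (rule AE_mp, intro AE_I2 impI)
      fix \<omega> assume "\<omega> \<in> space \<nu>" and ev: "eventually (\<lambda>n. \<omega> \<in> space \<nu> - A n) sequentially"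
      then obtain N where N: "\<And>n. n \<ge> N \<Longrightarrow> \<omega> \<in> space \<nu> - A n" by (auto simp: eventually_sequentially)
      have sub: "{S. dual_cycle_through d S \<and> (\<forall>e\<in>S. unsatisfied \<omega> e)} \<subseteq> (\<Union>n<N. cycle_edges ` cyc_lists n d)"
      proof
        fix S assume "S \<in> {S. dual_cycle_through d S \<and> (\<forall>e\<in>S. unsatisfied \<omega> e)}"
        then obtain vs where cyc: "dual_cycle_list vs" and dv: "d \<in> set vs" and Se: "S = cycle_edges vs"
          and uns: "\<forall>e\<in>S. unsatisfied \<omega> e"
          unfolding dual_cycle_through_def by auto
        have vsc: "vs \<in> cyc_lists (length vs) d" unfolding cyc_lists_def using cyc dv by auto
        have "length vs < N"
        proof (rule ccontr)
          assume "\<not> length vs < N"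
          then have "\<omega> \<in> space \<nu> - A (length vs)" using N by auto
          moreover have "\<omega> \<in> U (cycle_edges vs)" unfolding U_def using \<open>\<omega> \<in> space \<nu>\<close> uns Se by auto
          ultimately show False using vsc unfolding A_def by auto
        qed
        then show "S \<in> (\<Union>n<N. cycle_edges ` cyc_lists n d)" using vsc Se by auto
      qed
      have "finite (\<Union>n<N. cycle_edges ` cyc_lists n d)" using cyc_lists_card by auto
      then show "finite {S. dual_cycle_through d S \<and> (\<forall>e\<in>S. unsatisfied \<omega> e)}" using sub finite_subset by blast
    qed
  qed
  then show "AE \<omega> in \<nu>. \<forall>d. finite {S. dual_cycle_through d S \<and> (\<forall>e\<in>S. unsatisfied \<omega> e)}"
    by (simp add: AE_all_countable)
qed

end
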